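(* For every $f\in\mathcal{R}$ there exists $g\in\mathcal{R}$ such that $g=(f,g)$.
   Context: $\mathcal{R}$ is the group of rational homeomorphisms of $\{0,1\}^\omega$: those $f$ for which there is a finite asynchronous binary transducer $(S,s_0,t,o)$ ($S$ finite, $t\colon S\times\{0,1\}\to S$, $o\colon S\times\{0,1\}\to\{0,1\}^*$) with $f(\psi)=o(s_0,\psi)$, where for $\sigma_1\sigma_2\cdots$ one sets $s_1=s_0$, $s_{n+1}=t(s_n,\sigma_n)$ and $o(s_0,\sigma_1\sigma_2\cdots)=o(s_1,\sigma_1)o(s_2,\sigma_2)\cdots$. For homeomorphisms $f,g$, $(f,g)$ denotes the homeomorphism with $(f,g)(0\zeta)=0f(\zeta)$ and $(f,g)(1\zeta)=1g(\zeta)$ for all $\zeta\in\{0,1\}^\omega$. *)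

theory Defs
  imports "HOL-Analysis.Analysis"
begin

text \<open>Cantor space \<open>{0,1}^\<omega>\<close> is modelled as \<open>nat \<Rightarrow> bool\<close> (0 = False, 1 = True)
  with the product of discrete topologies.\<close>

definition cantor_top :: "(nat \<Rightarrow> bool) topology" where
  "cantor_top = product_topology (\<lambda>_. discrete_topology UNIV) UNIV"

text \<open>State sequence of a transducer on input \<open>\<psi>\<close>: \<open>tr_state t s0 \<psi> n\<close> is \<open>s_{n+1}\<close>.\<close>
fun tr_state :: "('s \<Rightarrow> bool \<Rightarrow> 's) \<Rightarrow> 's \<Rightarrow> (nat \<Rightarrow> bool) \<Rightarrow> nat \<Rightarrow> 's" where
  "tr_state t s0 \<psi> 0 = s0"
| "tr_state t s0 \<psi> (Suc n) = t (tr_state t s0 \<psi> n) (\<psi> n)"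

definition tr_out :: "('s \<Rightarrow> bool \<Rightarrow> 's) \<Rightarrow> ('s \<Rightarrow> bool \<Rightarrow> bool list) \<Rightarrow> 's
     \<Rightarrow> (nat \<Rightarrow> bool) \<Rightarrow> nat \<Rightarrow> bool list" where
  "tr_out t out s0 \<psi> n = concat (map (\<lambda>i. out (tr_state t s0 \<psi> i) (\<psi> i)) [0..<n])"

text \<open>The infinite concatenation \<open>o(s_0,\<psi>)\<close> equals the infinite word \<open>\<zeta>\<close>:
  every finite partial output is a prefix of \<open>\<zeta>\<close>, and the partial outputs have unbounded length.\<close>
definition tr_output_is :: "('s \<Rightarrow> bool \<Rightarrow> 's) \<Rightarrow> ('s \<Rightarrow> bool \<Rightarrow> bool list) \<Rightarrow> 's
     \<Rightarrow> (nat \<Rightarrow> bool) \<Rightarrow> (nat \<Rightarrow> bool) \<Rightarrow> bool" where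
  "tr_output_is t out s0 \<psi> \<zeta> \<longleftrightarrow>
     (\<forall>n. \<forall>i < length (tr_out t out s0 \<psi> n). tr_out t out s0 \<psi> n ! i = \<zeta> i) \<and>
     (\<forall>m. \<exists>n. m \<le> length (tr_out t out s0 \<psi> n))"

text \<open>Finite asynchronous binary transducer; the finite state set is taken as a finite
  subset \<open>S\<close> of \<open>nat\<close> (no loss of generality).\<close>
definition rational_map :: "((nat \<Rightarrow> bool) \<Rightarrow> (nat \<Rightarrow> bool)) \<Rightarrow> bool" where
  "rational_map f \<longleftrightarrow> (\<exists>(S::nat set) s0 t out. finite S \<and> s0 \<in> S \<and>
      (\<forall>s\<in>S. \<forall>b. t s b \<in> S) \<and> (\<forall>\<psi>. tr_output_is t out s0 \<psi> (f \<psi>)))"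

definition RatHomeo :: "((nat \<Rightarrow> bool) \<Rightarrow> (nat \<Rightarrow> bool)) set" where
  "RatHomeo = {f. homeomorphic_map cantor_top cantor_top f \<and> rational_map f}"

text \<open>\<open>(f,g)\<close>: \<open>(f,g)(0\<zeta>) = 0 f(\<zeta>)\<close>, \<open>(f,g)(1\<zeta>) = 1 g(\<zeta>)\<close>.\<close>
definition pairH :: "((nat \<Rightarrow> bool) \<Rightarrow> (nat \<Rightarrow> bool)) \<Rightarrow> ((nat \<Rightarrow> bool) \<Rightarrow> (nat \<Rightarrow> bool))
     \<Rightarrow> (nat \<Rightarrow> bool) \<Rightarrow> (nat \<Rightarrow> bool)" where
  "pairH f g \<psi> = case_nat (\<psi> 0) ((if \<psi> 0 then g else f) (\<psi> \<circ> Suc))"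

end

theory Submission imports Defs begin

lemma top_cantor[simp]: "topspace cantor_top = UNIV"
  by (simp add: cantor_top_def topspace_product_topology)

lemma cyl_open: "openin cantor_top {\<phi>. \<forall>j<N. \<phi> j = \<psi> j}"
proof (induction N)
  case 0 then show ?case using openin_topspace[of cantor_top] by simp
next
  case (Suc N)
  have e: "{\<phi>. \<forall>j<Suc N. \<phi> j = \<psi> j} = {\<phi>. \<forall>j<N. \<phi> j = \<psi> j} \<inter> {\<phi>. \<phi> N = \<psi> N}"
    by (auto simp: less_Suc_eq)
  have "openin cantor_top {\<phi>. \<phi> N = \<psi> N}"
  proof -
    have "continuous_map cantor_top (discrete_topology UNIV) (\<lambda>x. x N)"
      unfolding cantor_top_def by (rule continuous_map_product_projection) simp
    then have "openin cantor_top {x \<in> topspace cantor_top. x N \<in> {\<psi> N}}"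
      by (rule openin_continuous_map_preimage) simp
    then show ?thesis by simp
  qed
  then show ?case using Suc e by (simp add: openin_Int)
qed


lemma loc_cont:
  assumes "\<And>\<psi> i. \<exists>N. \<forall>\<phi>. (\<forall>j<N. \<phi> j = \<psi> j) \<longrightarrow> h \<phi> i = h \<psi> i"
  shows "continuous_map cantor_top cantor_top h"
proof -
  have "continuous_map cantor_top (discrete_topology UNIV) (\<lambda>x. h x k)" for k
  proof -
    have "openin cantor_top {x. h x k \<in> U}" for U
    proof (subst openin_subopen, intro ballI)
      fix x assume x: "x \<in> {x. h x k \<in> U}"
      obtain N where N: "\<forall>\<phi>. (\<forall>j<N. \<phi> j = x j) \<longrightarrow> h \<phi> k = h x k" using assms by blast
      have "{\<phi>. \<forall>j<N. \<phi> j = x j} \<subseteq> {x. h x k \<in> U}" 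
      proof
        fix \<phi> assume "\<phi> \<in> {\<phi>. \<forall>j<N. \<phi> j = x j}"
        then have "h \<phi> k = h x k" using N by blast
        then show "\<phi> \<in> {x. h x k \<in> U}" using x by simp
      qed
      then show "\<exists>T. openin cantor_top T \<and> x \<in> T \<and> T \<subseteq> {x. h x k \<in> U}"
        using cyl_open[of N x] by (intro exI[of _ "{\<phi>. \<forall>j<N. \<phi> j = x j}"]) simp
    qed
    then show ?thesis unfolding continuous_map_def by (simp add: cantor_top_def[symmetric])
  qed
  then show ?thesis unfolding cantor_top_def continuous_map_componentwise_UNIV by blast
qed


lemma cantor_compact: "compact_space cantor_top"
  unfolding cantor_top_def compact_space_product_topology by (simp add: compact_space_discrete_topology)
lemma cantor_haus: "Hausdorff_space cantor_top"
  unfolding cantor_top_def Hausdorff_space_product_topology by simp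

lemma tr_out_Suc: "tr_out t out s0 \<psi> (Suc n) = tr_out t out s0 \<psi> n @ out (tr_state t s0 \<psi> n) (\<psi> n)"
  by (simp add: tr_out_def)

lemma tr_state_agree: "(\<forall>j<N. \<phi> j = \<psi> j) \<Longrightarrow> k \<le> N \<Longrightarrow> tr_state t s0 \<phi> k = tr_state t s0 \<psi> k"
  by (induction k) auto

lemma tr_out_agree: "(\<forall>j<N. \<phi> j = \<psi> j) \<Longrightarrow> k \<le> N \<Longrightarrow> tr_out t out s0 \<phi> k = tr_out t out s0 \<psi> k"
  by (induction k) (auto simp: tr_out_Suc tr_state_agree, simp add: tr_out_def)

lemma rational_loc:
  assumes "rational_map h"
  shows "\<exists>N. \<forall>\<phi>. (\<forall>j<N. \<phi> j = \<psi> j) \<longrightarrow> h \<phi> i = h \<psi> i"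
proof -
  obtain s0 t out where o: "\<forall>\<psi>. tr_output_is t out (s0::nat) \<psi> (h \<psi>)"
    using assms unfolding rational_map_def by auto
  obtain N where N: "Suc i \<le> length (tr_out t out s0 \<psi> N)"
    using o unfolding tr_output_is_def by blast
  show ?thesis
  proof (intro exI allI impI)
    fix \<phi> assume a: "\<forall>j<N. \<phi> j = \<psi> j"
    have eq: "tr_out t out s0 \<phi> N = tr_out t out s0 \<psi> N" using tr_out_agree[OF a le_refl] .
    have "h \<phi> i = tr_out t out s0 \<phi> N ! i" using o N eq unfolding tr_output_is_def by (metis Suc_le_eq)
    also have "\<dots> = h \<psi> i" using o N eq unfolding tr_output_is_def by (metis Suc_le_eq)
    finally show "h \<phi> i = h \<psi> i" .
  qed
qed


definition blk :: "nat \<Rightarrow> (nat \<Rightarrow> bool) \<Rightarrow> nat \<Rightarrow> bool" where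
  "blk n \<zeta> = (\<lambda>i. if i < n then True else if i = n then False else \<zeta> (i - Suc n))"

definition GG :: "((nat \<Rightarrow> bool) \<Rightarrow> (nat \<Rightarrow> bool)) \<Rightarrow> (nat \<Rightarrow> bool) \<Rightarrow> (nat \<Rightarrow> bool)" where
  "GG f \<psi> = (if \<forall>i. \<psi> i then \<psi> else blk (LEAST i. \<not> \<psi> i) (f (\<lambda>j. \<psi> (j + Suc (LEAST i. \<not> \<psi> i)))))"

lemma least_blk: "(LEAST i. \<not> blk n \<zeta> i) = n"
  by (rule Least_equality) (auto simp: blk_def split: if_splits)

lemma blk_not_all: "\<not> (\<forall>i. blk n \<zeta> i)"
  by (auto simp: blk_def intro: exI[of _ n])

lemma shift_blk: "(\<lambda>j. blk n \<zeta> (j + Suc n)) = \<zeta>"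
  by (auto simp: blk_def)

lemma GG_blk: "GG f (blk n \<zeta>) = blk n (f \<zeta>)"
proof -
  have "\<not> (\<forall>i. blk n \<zeta> i)" by (rule blk_not_all)
  then show ?thesis unfolding GG_def least_blk shift_blk by (simp; blast)
qed

lemma GG_all: "\<forall>i. \<psi> i \<Longrightarrow> GG f \<psi> = \<psi>"
  by (simp add: GG_def)

lemma decomp: assumes "\<not> (\<forall>i. \<psi> i)" shows "\<exists>n \<zeta>. \<psi> = blk n \<zeta>"
proof -
  define n where "n = (LEAST i. \<not> \<psi> i)"
  have "\<psi> = blk n (\<lambda>j. \<psi> (j + Suc n))"
  proof
    fix i
    show "\<psi> i = blk n (\<lambda>j. \<psi> (j + Suc n)) i"
    proof (cases "i < n")
      case True then show ?thesis using not_less_Least[of i "\<lambda>i. \<not> \<psi> i"] n_def by (auto simp: blk_def)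
    next
      case False
      have "\<not> \<psi> n" using assms LeastI_ex[of "\<lambda>i. \<not> \<psi> i"] n_def by auto
      then show ?thesis using False by (auto simp: blk_def)
    qed
  qed
  then show ?thesis by blast
qed

lemma blk_inj: "blk n \<zeta> = blk m \<eta> \<Longrightarrow> n = m \<and> \<zeta> = \<eta>"
  by (metis least_blk shift_blk)

lemma blk_Suc_shift: "blk (Suc m) \<zeta> \<circ> Suc = blk m \<zeta>"
  by (auto simp: blk_def)
lemma blk_0_shift: "blk 0 \<zeta> \<circ> Suc = \<zeta>"
  by (auto simp: blk_def)
lemma case_nat_True: "case_nat True (blk m \<eta>) = blk (Suc m) \<eta>"
  by (rule ext, case_tac x) (auto simp: blk_def)
lemma case_nat_False: "case_nat False \<eta> = blk 0 \<eta>"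
  by (rule ext, case_tac x) (auto simp: blk_def)

lemma GG_fix: "pairH f (GG f) = GG f"
proof
  fix \<psi>
  show "pairH f (GG f) \<psi> = GG f \<psi>"
  proof (cases "\<forall>i. \<psi> i")
    case True
    then have "GG f (\<psi> \<circ> Suc) = \<psi> \<circ> Suc" by (simp add: GG_all)
    moreover have "case_nat (\<psi> 0) (\<psi> \<circ> Suc) = \<psi>" by (rule ext, case_tac x) auto
    ultimately show ?thesis using True by (simp add: pairH_def GG_all)
  next
    case False
    then obtain n \<zeta> where e: "\<psi> = blk n \<zeta>" using decomp by blast
    show ?thesis
    proof (cases n)
      case 0
      then show ?thesis using e by (simp add: pairH_def GG_blk blk_0_shift case_nat_False, simp add: blk_def)
    next
      case (Suc m)
      then show ?thesis using e by (simp add: pairH_def GG_blk blk_Suc_shift case_nat_True, simp add: blk_def)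
    qed
  qed
qed

lemma GG_inj: assumes "inj f" shows "inj (GG f)"
proof (rule injI)
  fix x y assume eq: "GG f x = GG f y"
  show "x = y"
  proof (cases "\<forall>i. x i")
    case True
    show ?thesis
    proof (cases "\<forall>i. y i")
      case True then show ?thesis using \<open>\<forall>i. x i\<close> by auto
    next
      case False
      then obtain n \<zeta> where "y = blk n \<zeta>" using decomp by blast
      then show ?thesis using eq True by (simp add: GG_all GG_blk blk_not_all)
    qed
  next
    case False
    then obtain n \<zeta> where ex: "x = blk n \<zeta>" using decomp by blast
    show ?thesis
    proof (cases "\<forall>i. y i")
      case True then show ?thesis using eq ex by (metis GG_all GG_blk blk_not_all)
    next
      case False
      then obtain m \<eta> where ey: "y = blk m \<eta>" using decomp by blast
      have "blk n (f \<zeta>) = blk m (f \<eta>)" using eq ex ey by (simp add: GG_blk)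
      then have "n = m" "f \<zeta> = f \<eta>" using blk_inj by blast+
      then have "n = m" "\<zeta> = \<eta>" using assms by (auto dest: injD)
      then show ?thesis using ex ey by simp
    qed
  qed
qed

lemma GG_surj: assumes "surj f" shows "surj (GG f)"
proof -
  have "z \<in> range (GG f)" for z
  proof (cases "\<forall>i. z i")
    case True then show ?thesis by (metis GG_all rangeI)
  next
    case False
    then obtain n \<zeta> where ez: "z = blk n \<zeta>" using decomp by blast
    obtain \<xi> where "\<zeta> = f \<xi>" using assms by (metis surjD)
    then have "GG f (blk n \<xi>) = z" using ez by (simp add: GG_blk)
    then show ?thesis by (metis rangeI)
  qed
  then show ?thesis by blast
qed


definition tt :: "(nat \<Rightarrow> bool \<Rightarrow> nat) \<Rightarrow> nat \<Rightarrow> nat \<Rightarrow> bool \<Rightarrow> nat" where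
  "tt t s0 s b = (if s = 0 then (if b then 0 else Suc s0) else Suc (t (s - 1) b))"
definition outG :: "(nat \<Rightarrow> bool \<Rightarrow> bool list) \<Rightarrow> nat \<Rightarrow> bool \<Rightarrow> bool list" where
  "outG out s b = (if s = 0 then [b] else out (s - 1) b)"

lemma tt_0[simp]: "tt t s0 0 b = (if b then 0 else Suc s0)" by (simp add: tt_def)
lemma tt_Suc[simp]: "tt t s0 (Suc s) b = Suc (t s b)" by (simp add: tt_def)
lemma outG_0[simp]: "outG out 0 b = [b]" by (simp add: outG_def)
lemma outG_Suc[simp]: "outG out (Suc s) b = out s b" by (simp add: outG_def)

lemma st_all: "\<forall>i. \<psi> i \<Longrightarrow> tr_state (tt t s0) 0 \<psi> k = 0"
  by (induction k) (auto)
lemma out_all: "\<forall>i. \<psi> i \<Longrightarrow> tr_out (tt t s0) (outG out) 0 \<psi> k = replicate k True"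
  by (induction k) (auto simp: tr_out_Suc st_all replicate_append_same, simp add: tr_out_def)

lemma blk_lt: "i < n \<Longrightarrow> blk n \<zeta> i = True" by (simp add: blk_def)
lemma blk_eq: "blk n \<zeta> n = False" by (simp add: blk_def)
lemma blk_gt: "blk n \<zeta> (Suc (n + m)) = \<zeta> m" by (simp add: blk_def)
lemma blk_gt': "n < i \<Longrightarrow> blk n \<zeta> i = \<zeta> (i - Suc n)" by (simp add: blk_def)

lemma st_A: "k \<le> n \<Longrightarrow> tr_state (tt t s0) 0 (blk n \<zeta>) k = 0"
  by (induction k) (auto simp: blk_lt)
lemma out_A: "k \<le> n \<Longrightarrow> tr_out (tt t s0) (outG out) 0 (blk n \<zeta>) k = replicate k True"
  by (induction k) (auto simp: tr_out_Suc st_A blk_lt replicate_append_same, simp add: tr_out_def)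
lemma st_B: "tr_state (tt t s0) 0 (blk n \<zeta>) (Suc (n + m)) = Suc (tr_state t s0 \<zeta> m)"
proof (induction m)
  case 0 then show ?case using st_A[OF le_refl, of t s0 n \<zeta>] by (simp add: blk_eq)
next
  case (Suc m)
  have "blk n \<zeta> (Suc (n + m)) = \<zeta> m" by (simp add: blk_def)
  then show ?case using Suc by simp
qed
lemma out_B: "tr_out (tt t s0) (outG out) 0 (blk n \<zeta>) (Suc (n + m))
   = replicate n True @ False # tr_out t out s0 \<zeta> m"
proof (induction m)
  case 0 then show ?case using st_A[OF le_refl, of t s0 n \<zeta>] out_A[OF le_refl, of t s0 out n \<zeta>]
    by (simp add: tr_out_Suc blk_eq, simp add: tr_out_def)
next
  case (Suc m)
  have b: "blk n \<zeta> (Suc (n + m)) = \<zeta> m" by (simp add: blk_def)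
  have "tr_out (tt t s0) (outG out) 0 (blk n \<zeta>) (Suc (n + Suc m)) =
     tr_out (tt t s0) (outG out) 0 (blk n \<zeta>) (Suc (n + m)) @
       outG out (tr_state (tt t s0) 0 (blk n \<zeta>) (Suc (n + m))) (blk n \<zeta> (Suc (n + m)))"
    by (simp only: add_Suc_right tr_out_Suc)
  also have "\<dots> = replicate n True @ False # tr_out t out s0 \<zeta> m @ out (tr_state t s0 \<zeta> m) (\<zeta> m)"
    by (simp only: Suc st_B b outG_Suc) simp
  finally show ?case by (simp add: tr_out_Suc)
qed

lemma GG_rational: assumes "rational_map f" shows "rational_map (GG f)"
proof -
  obtain S s0 t out where S: "finite S" "(s0::nat) \<in> S" "\<forall>s\<in>S. \<forall>b. t s b \<in> S"
     and o: "\<forall>\<psi>. tr_output_is t out s0 \<psi> (f \<psi>)"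
    using assms unfolding rational_map_def by auto
  have out: "tr_output_is (tt t s0) (outG out) 0 \<psi> (GG f \<psi>)" for \<psi>
  proof (cases "\<forall>i. \<psi> i")
    case True
    have r: "tr_out (tt t s0) (outG out) 0 \<psi> k = replicate k True" for k using out_all[OF True] .
    have g: "GG f \<psi> = \<psi>" using GG_all[OF True] .
    show ?thesis unfolding tr_output_is_def r g
    proof (intro conjI allI impI)
      fix n i assume "i < length (replicate n True)"
      then show "replicate n True ! i = \<psi> i" using True by simp
    next
      fix m show "\<exists>n. m \<le> length (replicate n True)" by (rule exI[of _ m]) simp
    qed
  next
    case False
    then obtain n \<zeta> where e: "\<psi> = blk n \<zeta>" using decomp by blast
    have oz: "tr_output_is t out s0 \<zeta> (f \<zeta>)" using o by blast
    have P: "tr_out (tt t s0) (outG out) 0 \<psi> k ! i = blk n (f \<zeta>) i"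
      if i: "i < length (tr_out (tt t s0) (outG out) 0 \<psi> k)" for k i
    proof (cases "k \<le> n")
      case True then show ?thesis using i e by (auto simp: out_A blk_lt)
    next
      case False
      then obtain m where k: "k = Suc (n + m)" by (metis add_Suc le_iff_add not_less_eq_eq)
      show ?thesis
      proof (cases "i \<le> n")
        case True then show ?thesis using e k
          by (cases "i = n") (auto simp: out_B blk_lt blk_eq nth_append)
      next
        case False
        have "i - Suc n < length (tr_out t out s0 \<zeta> m)" using i e k False by (simp add: out_B)
        then have "tr_out t out s0 \<zeta> m ! (i - Suc n) = f \<zeta> (i - Suc n)"
          using oz unfolding tr_output_is_def by blast
        then show ?thesis using e k False by (simp add: out_B blk_gt' nth_append)
      qed
    qed
    have Q: "\<exists>k. M \<le> length (tr_out (tt t s0) (outG out) 0 \<psi> k)" for M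
    proof -
      obtain m where "M \<le> length (tr_out t out s0 \<zeta> m)" using oz unfolding tr_output_is_def by blast
      then have "M \<le> length (tr_out (tt t s0) (outG out) 0 \<psi> (Suc (n + m)))" using e by (simp add: out_B)
      then show ?thesis by blast
    qed
    show ?thesis unfolding tr_output_is_def using P Q e by (simp add: GG_blk)
  qed
  have "finite (insert 0 (Suc ` S))" using S by simp
  moreover have "\<forall>s\<in>insert 0 (Suc ` S). \<forall>b. tt t s0 s b \<in> insert 0 (Suc ` S)"
    using S by (auto simp: tt_def)
  ultimately show ?thesis unfolding rational_map_def using out by blast
qed

theorem lemma2p6:
  assumes "f \<in> RatHomeo"
  shows "\<exists>g \<in> RatHomeo. g = pairH f g"
proof -
  have hf: "homeomorphic_map cantor_top cantor_top f" and rf: "rational_map f"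
    using assms by (auto simp: RatHomeo_def)
  have s1: "f ` UNIV = UNIV" using homeomorphic_imp_surjective_map[OF hf] by simp
  have i1: "inj f" using homeomorphic_imp_injective_map[OF hf] by simp
  have "bij f" using s1 i1 by (simp add: bij_def)
  have inj: "inj (GG f)" by (rule GG_inj[OF i1])
  have sj: "surj (GG f)" by (rule GG_surj) (use s1 in simp)
  have rg: "rational_map (GG f)" using GG_rational[OF rf] .
  have cg: "continuous_map cantor_top cantor_top (GG f)"
    by (rule loc_cont) (rule rational_loc[OF rg])
  have "homeomorphic_map cantor_top cantor_top (GG f)"
  proof (rule continuous_imp_homeomorphic_map[OF cg cantor_compact cantor_haus])
    show "GG f ` topspace cantor_top = topspace cantor_top" using sj by simp
    show "inj_on (GG f) (topspace cantor_top)" using inj by simp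
  qed
  then have "GG f \<in> RatHomeo" using rg by (simp add: RatHomeo_def)
  then show ?thesis using GG_fix[of f] by (intro bexI[of _ "GG f"]) simp_all
qed

end
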